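(* Let $H=P_3$ (the path $1-2-3$) and let $G_i$ be a $d_i$-regular graph of order $n_i$ with adjacency eigenvalues $d_i=\lambda_1(A(G_i)),\dots,\lambda_{n_i}(A(G_i))$, $i=1,2,3$, with $d_1=d_3$. Let $G=\bigvee_{P_3}\{G_1,G_2,G_3\}$ and $s\in\mathbb{R}$. Set $N_1=N_3=n_2$, $N_2=n_1+n_3$, $\sigma(M_i(s))=\{s^2(d_i+N_i-1)-s\lambda_k(A(G_i))+1\}_{k=1}^{n_i}$, $$a(s)=s^2(d_1+n_2-1)-sd_1+1,\qquad b(s)=s^2(d_2+(n_1+n_3)-1)-sd_2+1.$$ Then, as multisets, $$\sigma(M_G(s))=\Big(\bigcup_{i=1}^3\sigma(M_i(s))\cup\Big\{\tfrac12\big(a(s)+b(s)\pm\sqrt{(a(s)-b(s))^2+4s^2n_2(n_1+n_3)}\big)\Big\}\Big)-\{a(s),b(s)\},$$ where one copy each of $a(s)$ and $b(s)$ is removed.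
   Context: For a simple undirected graph $G$ with adjacency matrix $A$, degree matrix $D$ and identity $I$, and real $s$, the deformed Laplacian matrix is $M_G(s)=I-sA+s^2(D-I)$; $\sigma(\cdot)$ is the multiset of eigenvalues. $H$-join: given a graph $H$ on vertex set $\{1,\dots,r\}$ and pairwise vertex-disjoint graphs $G_1,\dots,G_r$, $\bigvee_H\{G_i\}$ has vertex set $\bigcup_iV(G_i)$ and edges $\bigcup_iE(G_i)$ together with all edges $uv$, $u\in V(G_i)$, $v\in V(G_j)$, for each $ij\in E(H)$. *)

theory Defs
  imports "Jordan_Normal_Form.Matrix" "Jordan_Normal_Form.Char_Poly"
          "HOL-Computational_Algebra.Fundamental_Theorem_Algebra"
begin

definition simple_graph :: "nat \<Rightarrow> (nat \<Rightarrow> nat \<Rightarrow> bool) \<Rightarrow> bool" where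
  "simple_graph n E \<longleftrightarrow>
     (\<forall>u v. E u v \<longrightarrow> u < n \<and> v < n) \<and> (\<forall>u v. E u v \<longrightarrow> E v u) \<and> (\<forall>u. \<not> E u u)"

definition degree :: "nat \<Rightarrow> (nat \<Rightarrow> nat \<Rightarrow> bool) \<Rightarrow> nat \<Rightarrow> nat" where
  "degree n E u = card {v. v < n \<and> E u v}"

definition regular :: "nat \<Rightarrow> (nat \<Rightarrow> nat \<Rightarrow> bool) \<Rightarrow> nat \<Rightarrow> bool" where
  "regular n E d \<longleftrightarrow> (\<forall>u < n. degree n E u = d)"

definition adj_mat :: "nat \<Rightarrow> (nat \<Rightarrow> nat \<Rightarrow> bool) \<Rightarrow> real mat" where
  "adj_mat n E = mat n n (\<lambda>(u, v). if E u v then 1 else 0)"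

definition deg_mat :: "nat \<Rightarrow> (nat \<Rightarrow> nat \<Rightarrow> bool) \<Rightarrow> real mat" where
  "deg_mat n E = mat n n (\<lambda>(u, v). if u = v then real (degree n E u) else 0)"

definition deformed_laplacian :: "nat \<Rightarrow> (nat \<Rightarrow> nat \<Rightarrow> bool) \<Rightarrow> real \<Rightarrow> real mat" where
  "deformed_laplacian n E s =
     1\<^sub>m n - s \<cdot>\<^sub>m adj_mat n E + (s^2) \<cdot>\<^sub>m (deg_mat n E - 1\<^sub>m n)"

definition spec :: "real mat \<Rightarrow> complex multiset" where
  "spec M = proots (char_poly (map_mat complex_of_real M))"

text \<open>The vertex v of G_i is represented by offset i + v, offset i = sum of ns j, j < i
  (this realises the disjoint union of the vertex sets).\<close>
definition offset :: "(nat \<Rightarrow> nat) \<Rightarrow> nat \<Rightarrow> nat" where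
  "offset ns i = (\<Sum>j<i. ns j)"

definition hjoin_order :: "nat \<Rightarrow> (nat \<Rightarrow> nat) \<Rightarrow> nat" where
  "hjoin_order r ns = (\<Sum>j<r. ns j)"

definition hjoin_edges ::
  "nat \<Rightarrow> (nat \<Rightarrow> nat \<Rightarrow> bool) \<Rightarrow> (nat \<Rightarrow> nat) \<Rightarrow> (nat \<Rightarrow> nat \<Rightarrow> nat \<Rightarrow> bool)
     \<Rightarrow> nat \<Rightarrow> nat \<Rightarrow> bool" where
  "hjoin_edges r H ns Es x y \<longleftrightarrow>
     (\<exists>i j u v. i < r \<and> j < r \<and> u < ns i \<and> v < ns j \<and>
        x = offset ns i + u \<and> y = offset ns j + v \<and>
        ((i = j \<and> Es i u v) \<or> (i \<noteq> j \<and> H i j)))"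

text \<open>The path P_3 on vertices 0 - 1 - 2 (the paper's 1 - 2 - 3).\<close>
definition P3 :: "nat \<Rightarrow> nat \<Rightarrow> bool" where
  "P3 i j \<longleftrightarrow> {i, j} = {0, 1} \<or> {i, j} = {1, 2}"

end

theory Submission
  imports Defs "Jordan_Normal_Form.Schur_Decomposition"
begin


lemma det_perm_both:
  assumes A: "(A :: 'a :: comm_ring_1 mat) \<in> carrier_mat n n" and p: "p permutes {0..<n}"
  shows "det (mat n n (\<lambda>(i,j). A $$ (p i, p j))) = det A"
proof -
  have pn: "\<And>i. i < n \<Longrightarrow> p i < n" using p permutes_in_image[OF p] by auto
  define B where "B = mat n n (\<lambda>(i,j). A $$ (i, p j))"
  have B: "B \<in> carrier_mat n n" unfolding B_def by auto
  have "mat n n (\<lambda>(i,j). A $$ (p i, p j)) = mat n n (\<lambda>(i,j). B $$ (p i, j))"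
    by (rule eq_matI, auto simp: B_def pn)
  hence 1: "det (mat n n (\<lambda>(i,j). A $$ (p i, p j))) = signof p * det B"
    using det_permute_rows[OF B p] by simp
  have "det B = det (transpose_mat B)" using det_transpose[OF B] by simp
  also have "transpose_mat B = mat n n (\<lambda>(i,j). (transpose_mat A) $$ (p i, j))"
    by (rule eq_matI, insert A, auto simp: B_def pn)
  also have "det \<dots> = signof p * det (transpose_mat A)"
    by (rule det_permute_rows[OF _ p], insert A, auto)
  also have "det (transpose_mat A) = det A" using det_transpose[OF A] by simp
  finally have 2: "det B = signof p * det A" .
  have "signof p * (signof p :: 'a) = 1"
    by (simp add: sign_def flip: of_int_mult)
  thus ?thesis unfolding 1 2 by (simp add: mult.assoc[symmetric])
qed

lemma char_poly_perm:
  assumes A: "(A :: 'a :: comm_ring_1 mat) \<in> carrier_mat n n" and p: "p permutes {0..<n}"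
  shows "char_poly (mat n n (\<lambda>(i,j). A $$ (p i, p j))) = char_poly A"
proof -
  have pn: "\<And>i. i < n \<Longrightarrow> p i < n" using p permutes_in_image[OF p] by auto
  have inj: "\<And>i j. p i = p j \<longleftrightarrow> i = j" using permutes_inj[OF p] by (auto simp: inj_def)
  have "char_poly_matrix (mat n n (\<lambda>(i,j). A $$ (p i, p j))) =
     mat n n (\<lambda>(i,j). char_poly_matrix A $$ (p i, p j))"
    by (rule eq_matI, insert A, auto simp: char_poly_matrix_def pn inj)
  thus ?thesis unfolding char_poly_def using det_perm_both[OF char_poly_matrix_closed[OF A] p] by simp
qed

lemma char_poly_four_block_lower0:
  assumes A1: "(A1 :: 'a :: idom mat) \<in> carrier_mat n n"
  and A2: "A2 \<in> carrier_mat n m" and A3: "A3 \<in> carrier_mat m m"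
  shows "char_poly (four_block_mat A1 A2 (0\<^sub>m m n) A3) = char_poly A1 * char_poly A3"
proof -
  let ?cm = "\<lambda> A. [:0, 1:] \<cdot>\<^sub>m 1\<^sub>m (dim_row A) +
         map_mat (\<lambda>a. [:- a:]) A"
  let ?B2 = "map_mat (\<lambda>a. [:- a:]) A2"
  have "char_poly (four_block_mat A1 A2 (0\<^sub>m m n) A3) = det (?cm (four_block_mat A1 A2 (0\<^sub>m m n) A3))"
    unfolding char_poly_defs using A1 A3 by simp
  also have "?cm (four_block_mat A1 A2 (0\<^sub>m m n) A3) = four_block_mat (?cm A1) ?B2 (0\<^sub>m m n) (?cm A3)"
    by (rule eq_matI, insert A1 A2 A3, auto simp: one_poly_def)
  also have "det \<dots> = det (?cm A1) * det (?cm A3)"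
    by (rule det_four_block_mat_lower_left_zero, insert A1 A2 A3, auto)
  also have "\<dots> = char_poly A1 * char_poly A3" unfolding char_poly_defs ..
  finally show ?thesis .
qed

lemma char_poly_split:
  assumes A: "(A :: 'a :: idom mat) \<in> carrier_mat n n" and p: "p permutes {0..<n}" and k: "k \<le> n"
  and z: "\<And>i j. k \<le> i \<Longrightarrow> i < n \<Longrightarrow> j < k \<Longrightarrow> A $$ (p i, p j) = 0"
  shows "char_poly A = char_poly (mat k k (\<lambda>(i,j). A $$ (p i, p j))) *
     char_poly (mat (n-k) (n-k) (\<lambda>(i,j). A $$ (p (i+k), p (j+k))))" (is "_ = ?R")
proof -
  have "mat n n (\<lambda>(i,j). A $$ (p i, p j)) = four_block_mat (mat k k (\<lambda>(i,j). A $$ (p i, p j)))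
     (mat k (n-k) (\<lambda>(i,j). A $$ (p i, p (j+k)))) (0\<^sub>m (n-k) k)
     (mat (n-k) (n-k) (\<lambda>(i,j). A $$ (p (i+k), p (j+k))))"
    by (rule eq_matI, insert k z, auto simp: four_block_mat_def)
  hence "char_poly A = char_poly (four_block_mat (mat k k (\<lambda>(i,j). A $$ (p i, p j)))
     (mat k (n-k) (\<lambda>(i,j). A $$ (p i, p (j+k)))) (0\<^sub>m (n-k) k)
     (mat (n-k) (n-k) (\<lambda>(i,j). A $$ (p (i+k), p (j+k)))))"
    using char_poly_perm[OF A p] by simp
  also have "\<dots> = ?R" by (rule char_poly_four_block_lower0, auto)
  finally show ?thesis .
qed



lemma sum_delta2:
  fixes Z :: "nat \<Rightarrow> 'a :: comm_ring_1"
  assumes "r < n" "f r < n"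
  shows "(\<Sum>k<n. ((if k = r then 1 else 0) + (if k = f r \<and> f r \<noteq> r then 1 else 0)) * Z k)
     = Z r + (if f r \<noteq> r then Z (f r) else 0)"
    "(\<Sum>k<n. ((if k = r then 1 else 0) - (if k = f r \<and> f r \<noteq> r then 1 else 0)) * Z k)
     = Z r - (if f r \<noteq> r then Z (f r) else 0)"
proof -
  have d: "(\<Sum>k<n. (if k = f r \<and> f r \<noteq> r then Z k else 0)) = (if f r \<noteq> r then Z (f r) else 0)"
    using assms by (cases "f r = r", auto simp: sum.delta')
  have e: "(\<Sum>k<n. (if k = r then Z k else 0)) = Z r" using assms by (simp add: sum.delta')
  have "(\<Sum>k<n. ((if k = r then 1 else 0) + (if k = f r \<and> f r \<noteq> r then 1 else 0)) * Z k)
    = (\<Sum>k<n. (if k = r then Z k else 0) + (if k = f r \<and> f r \<noteq> r then Z k else 0))"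
    by (rule sum.cong, auto)
  also have "\<dots> = Z r + (if f r \<noteq> r then Z (f r) else 0)" unfolding sum.distrib d e ..
  finally show "(\<Sum>k<n. ((if k = r then 1 else 0) + (if k = f r \<and> f r \<noteq> r then 1 else 0)) * Z k)
     = Z r + (if f r \<noteq> r then Z (f r) else 0)" .
  have "(\<Sum>k<n. ((if k = r then 1 else 0) - (if k = f r \<and> f r \<noteq> r then 1 else 0)) * Z k)
    = (\<Sum>k<n. (if k = r then Z k else 0) - (if k = f r \<and> f r \<noteq> r then Z k else 0))"
    by (rule sum.cong, auto)
  also have "\<dots> = Z r - (if f r \<noteq> r then Z (f r) else 0)" unfolding sum_subtractf d e ..
  finally show "(\<Sum>k<n. ((if k = r then 1 else 0) - (if k = f r \<and> f r \<noteq> r then 1 else 0)) * Z k)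
     = Z r - (if f r \<noteq> r then Z (f r) else 0)" .
qed

lemma sum_col:
  fixes Z :: "nat \<Rightarrow> 'a :: comm_ring_1"
  assumes f: "\<And>r. r < n \<Longrightarrow> f r < n \<and> f (f r) = f r" and c: "c < n"
  shows "(\<Sum>k<n. Z k * (if c = k \<or> c = f k then 1 else 0)) =
     (if f c = c then (\<Sum>k\<in>{k. k < n \<and> f k = c}. Z k) else Z c)"
proof (cases "f c = c")
  case True
  have "(\<Sum>k<n. Z k * (if c = k \<or> c = f k then 1 else 0)) = (\<Sum>k<n. if f k = c then Z k else 0)"
    by (rule sum.cong, insert True, auto)
  also have "\<dots> = (\<Sum>k\<in>{k. k < n \<and> f k = c}. Z k)"
    by (simp add: sum.If_cases Int_def conj_commute)
  finally show ?thesis using True by simp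
next
  case False
  have "(\<Sum>k<n. Z k * (if c = k \<or> c = f k then 1 else 0)) = (\<Sum>k<n. if k = c then Z k else 0)"
    by (rule sum.cong, insert False f, auto)
  thus ?thesis using False c by simp
qed

lemma transform:
  fixes M :: "'a :: comm_ring_1 mat"
  assumes M: "M \<in> carrier_mat n n" and f: "\<And>r. r < n \<Longrightarrow> f r < n \<and> f (f r) = f r"
  defines "Y \<equiv> (\<lambda>r c. if f c = c then (\<Sum>k\<in>{k. k < n \<and> f k = c}. M $$ (r,k)) else M $$ (r,c))"
  shows "char_poly M = char_poly (mat n n (\<lambda>(r,c). Y r c - (if f r \<noteq> r then Y (f r) c else 0)))"
proof -
  define P where "P = mat n n (\<lambda>(r,c). if c = r \<or> c = f r then 1 else (0::'a))"
  define Q where "Q = mat n n (\<lambda>(r,c). (if c = r then 1 else 0) - (if c = f r \<and> f r \<noteq> r then 1 else (0::'a)))"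
  have P: "P \<in> carrier_mat n n" and Q: "Q \<in> carrier_mat n n" unfolding P_def Q_def by auto
  have Prow: "P $$ (r,k) = (if k = r then 1 else 0) + (if k = f r \<and> f r \<noteq> r then 1 else 0)"
    if "r < n" "k < n" for r k using that by (auto simp: P_def)
  have Qrow: "Q $$ (r,k) = (if k = r then 1 else 0) - (if k = f r \<and> f r \<noteq> r then 1 else 0)"
    if "r < n" "k < n" for r k using that by (auto simp: Q_def)
  have PQ: "P * Q = 1\<^sub>m n"
  proof (rule eq_matI)
    fix r c assume r: "r < dim_row (1\<^sub>m n :: 'a mat)" and c: "c < dim_col (1\<^sub>m n :: 'a mat)"
    hence rn: "r < n" and cn: "c < n" by auto
    have "(P * Q) $$ (r,c) = (\<Sum>k<n. P $$ (r,k) * Q $$ (k,c))"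
      using P Q rn cn by (auto simp: scalar_prod_def atLeast0LessThan intro!: sum.cong)
    also have "\<dots> = (\<Sum>k<n. ((if k = r then 1 else 0) + (if k = f r \<and> f r \<noteq> r then 1 else 0)) * Q $$ (k,c))"
      by (rule sum.cong, auto simp: Prow rn)
    also have "\<dots> = Q $$ (r,c) + (if f r \<noteq> r then Q $$ (f r, c) else 0)"
      by (rule sum_delta2, insert f rn, auto)
    also have "\<dots> = 1\<^sub>m n $$ (r,c)" using rn cn f[OF rn] by (auto simp: Qrow)
    finally show "(P * Q) $$ (r,c) = 1\<^sub>m n $$ (r,c)" .
  qed (insert P Q, auto)
  have QP: "Q * P = 1\<^sub>m n"
  proof (rule eq_matI)
    fix r c assume r: "r < dim_row (1\<^sub>m n :: 'a mat)" and c: "c < dim_col (1\<^sub>m n :: 'a mat)"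
    hence rn: "r < n" and cn: "c < n" by auto
    have "(Q * P) $$ (r,c) = (\<Sum>k<n. Q $$ (r,k) * P $$ (k,c))"
      using P Q rn cn by (auto simp: scalar_prod_def atLeast0LessThan intro!: sum.cong)
    also have "\<dots> = (\<Sum>k<n. ((if k = r then 1 else 0) - (if k = f r \<and> f r \<noteq> r then 1 else 0)) * P $$ (k,c))"
      by (rule sum.cong, auto simp: Qrow rn)
    also have "\<dots> = P $$ (r,c) - (if f r \<noteq> r then P $$ (f r, c) else 0)"
      by (rule sum_delta2, insert f rn, auto)
    also have "\<dots> = 1\<^sub>m n $$ (r,c)" using rn cn f[OF rn] by (auto simp: P_def)
    finally show "(Q * P) $$ (r,c) = 1\<^sub>m n $$ (r,c)" .
  qed (insert P Q, auto)
  have QMP: "Q * M * P = mat n n (\<lambda>(r,c). Y r c - (if f r \<noteq> r then Y (f r) c else 0))"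
  proof (rule eq_matI)
    fix r c assume r: "r < dim_row (mat n n (\<lambda>(r,c). Y r c - (if f r \<noteq> r then Y (f r) c else 0)))"
      and c: "c < dim_col (mat n n (\<lambda>(r,c). Y r c - (if f r \<noteq> r then Y (f r) c else 0)))"
    hence rn: "r < n" and cn: "c < n" by auto
    have QM: "(Q * M) $$ (r,k) = M $$ (r,k) - (if f r \<noteq> r then M $$ (f r, k) else 0)" if "r < n" "k < n" for r k
    proof -
      have "(Q * M) $$ (r,k) = (\<Sum>j<n. Q $$ (r,j) * M $$ (j,k))"
        using M Q that by (auto simp: scalar_prod_def atLeast0LessThan intro!: sum.cong)
      also have "\<dots> = (\<Sum>j<n. ((if j = r then 1 else 0) - (if j = f r \<and> f r \<noteq> r then 1 else 0)) * M $$ (j,k))"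
        by (rule sum.cong, auto simp: Qrow that)
      also have "\<dots> = M $$ (r,k) - (if f r \<noteq> r then M $$ (f r, k) else 0)"
        by (rule sum_delta2, insert f that, auto)
      finally show ?thesis .
    qed
    define QMm where "QMm = Q * M"
    have QMc: "QMm \<in> carrier_mat n n" unfolding QMm_def using Q M by auto
    have "(Q * M * P) $$ (r,c) = (\<Sum>k<n. QMm $$ (r,k) * P $$ (k,c))"
      unfolding QMm_def[symmetric] using QMc P rn cn by (auto simp: scalar_prod_def atLeast0LessThan intro!: sum.cong)
    also have "\<dots> = (\<Sum>k<n. (M $$ (r,k) - (if f r \<noteq> r then M $$ (f r, k) else 0)) * (if c = k \<or> c = f k then 1 else 0))"
      by (rule sum.cong, auto simp: QM[folded QMm_def] rn cn P_def)
    also have "\<dots> = (if f c = c then (\<Sum>k\<in>{k. k < n \<and> f k = c}. (M $$ (r,k) - (if f r \<noteq> r then M $$ (f r, k) else 0))) else (M $$ (r,c) - (if f r \<noteq> r then M $$ (f r, c) else 0)))"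
      by (rule sum_col[OF f cn])
    also have "\<dots> = Y r c - (if f r \<noteq> r then Y (f r) c else 0)"
      unfolding Y_def by (auto simp: sum_subtractf)
    finally show "(Q * M * P) $$ (r,c) = mat n n (\<lambda>(r,c). Y r c - (if f r \<noteq> r then Y (f r) c else 0)) $$ (r,c)"
      using rn cn by simp
  qed (insert M P Q, auto)
  have "similar_mat_wit (Q * M * P) M Q P"
    unfolding similar_mat_wit_def Let_def using M P Q PQ QP by auto
  hence "similar_mat (Q * M * P) M" unfolding similar_mat_def by blast
  from char_poly_similar[OF this] show ?thesis unfolding QMP by simp
qed



lemma det1: assumes A: "(A :: 'a :: comm_ring_1 mat) \<in> carrier_mat 1 1"
  shows "det A = A $$ (0,0)"
proof -
  have "det A = (\<Sum>j<1. A $$ (0, j) * cofactor A 0 j)" by (rule laplace_expansion_row[OF A], simp)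
  also have "\<dots> = A $$ (0,0) * det (mat_delete A 0 0)" by (simp add: cofactor_def)
  also have "det (mat_delete A 0 0) = 1" by (rule det_dim_zero, insert mat_delete_carrier[OF A], simp)
  finally show ?thesis by simp
qed

lemma det2: assumes A: "(A :: 'a :: comm_ring_1 mat) \<in> carrier_mat 2 2"
  shows "det A = A $$ (0,0) * A $$ (1,1) - A $$ (0,1) * A $$ (1,0)"
proof -
  have c: "\<And>j. mat_delete A 0 j \<in> carrier_mat 1 1" using mat_delete_carrier[OF A] by simp
  have "det A = (\<Sum>j<2. A $$ (0, j) * cofactor A 0 j)" by (rule laplace_expansion_row[OF A], simp)
  also have "\<dots> = A $$ (0,0) * det (mat_delete A 0 0) - A $$ (0,1) * det (mat_delete A 0 1)"
    by (simp add: cofactor_def eval_nat_numeral)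
  also have "det (mat_delete A 0 0) = A $$ (1,1)"
    by (subst det1[OF c], insert A, auto simp: mat_delete_def)
  also have "det (mat_delete A 0 1) = A $$ (1,0)"
    by (subst det1[OF c], insert A, auto simp: mat_delete_def)
  finally show ?thesis .
qed

lemma det3: assumes A: "(A :: 'a :: comm_ring_1 mat) \<in> carrier_mat 3 3"
  shows "det A = A $$ (0,0) * (A $$ (1,1) * A $$ (2,2) - A $$ (1,2) * A $$ (2,1))
    - A $$ (0,1) * (A $$ (1,0) * A $$ (2,2) - A $$ (1,2) * A $$ (2,0))
    + A $$ (0,2) * (A $$ (1,0) * A $$ (2,1) - A $$ (1,1) * A $$ (2,0))"
proof -
  have c: "\<And>j. mat_delete A 0 j \<in> carrier_mat 2 2" using mat_delete_carrier[OF A] by simp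
  have "det A = (\<Sum>j<3. A $$ (0, j) * cofactor A 0 j)" by (rule laplace_expansion_row[OF A], simp)
  also have "\<dots> = A $$ (0,0) * det (mat_delete A 0 0) - A $$ (0,1) * det (mat_delete A 0 1)
     + A $$ (0,2) * det (mat_delete A 0 2)"
    by (simp add: cofactor_def eval_nat_numeral)
  also have "det (mat_delete A 0 0) = A $$ (1,1) * A $$ (2,2) - A $$ (1,2) * A $$ (2,1)"
    by (subst det2[OF c], insert A, auto simp: mat_delete_def numeral_2_eq_2)
  also have "det (mat_delete A 0 1) = A $$ (1,0) * A $$ (2,2) - A $$ (1,2) * A $$ (2,0)"
    by (subst det2[OF c], insert A, auto simp: mat_delete_def numeral_2_eq_2)
  also have "det (mat_delete A 0 2) = A $$ (1,0) * A $$ (2,1) - A $$ (1,1) * A $$ (2,0)"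
    by (subst det2[OF c], insert A, auto simp: mat_delete_def numeral_2_eq_2)
  finally show ?thesis .
qed

lemma char_poly_1: "char_poly (mat 1 1 (\<lambda>_. a)) = [:- (a :: 'a :: comm_ring_1), 1:]"
  unfolding char_poly_def by (subst det1, auto simp: char_poly_matrix_def)

lemma char_poly_3: "char_poly (mat 3 3 (\<lambda>(i,j). q i j)) =
  (let X = (\<lambda>i j. (if i = j then [:0,1:] else 0) + [:- q i j :]) in
    X 0 0 * (X 1 1 * X 2 2 - X 1 2 * X 2 1)
    - X 0 1 * (X 1 0 * X 2 2 - X 1 2 * X 2 0)
    + X 0 2 * (X 1 0 * X 2 1 - X 1 1 * X 2 0))"
  unfolding char_poly_def by (subst det3, auto simp: char_poly_matrix_def Let_def)



lemma proots_linear_list: "proots (\<Prod>a\<leftarrow>xs. [:- a, 1:]) = mset (xs :: 'a :: idom list)"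
proof (induction xs)
  case (Cons a xs)
  have nz: "(\<Prod>a\<leftarrow>xs. [:- a, (1::'a):]) \<noteq> 0"
    unfolding prod_list_zero_iff by auto
  have "proots (\<Prod>a\<leftarrow>a # xs. [:- a, 1:]) = proots [:- a, 1:] + proots (\<Prod>a\<leftarrow>xs. [:- a, 1:])"
    unfolding list.map prod_list.Cons by (rule proots_mult, simp, rule nz)
  thus ?case using Cons by simp
qed simp

lemma similar_mat_wit_add_id: fixes A :: "'a :: comm_ring_1 mat"
  assumes w: "similar_mat_wit A B P Q" and A: "A \<in> carrier_mat n n"
  shows "similar_mat_wit (A + c \<cdot>\<^sub>m 1\<^sub>m n) (B + c \<cdot>\<^sub>m 1\<^sub>m n) P Q"
proof -
  note main = similar_mat_witD2[OF A w]
  have "P * (B + c \<cdot>\<^sub>m 1\<^sub>m n) * Q = P * B * Q + P * (c \<cdot>\<^sub>m 1\<^sub>m n) * Q"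
    using main by (simp add: mult_add_distrib_mat add_mult_distrib_mat[of _ n n])
  also have "P * (c \<cdot>\<^sub>m 1\<^sub>m n) = c \<cdot>\<^sub>m P"
    using mult_smult_distrib[of P n n "1\<^sub>m n" n c] main by simp
  also have "(c \<cdot>\<^sub>m P) * Q = c \<cdot>\<^sub>m (P * Q)"
    using mult_smult_assoc_mat[of P n n Q n c] main by simp
  finally have "P * (B + c \<cdot>\<^sub>m 1\<^sub>m n) * Q = A + c \<cdot>\<^sub>m 1\<^sub>m n" using main by simp
  thus ?thesis unfolding similar_mat_wit_def Let_def using main A by auto
qed

lemma spec_affine:
  fixes A :: "complex mat"
  assumes A: "A \<in> carrier_mat n n"
  shows "proots (char_poly (c \<cdot>\<^sub>m 1\<^sub>m n - s \<cdot>\<^sub>m A)) = image_mset (\<lambda>\<mu>. c - s * \<mu>) (proots (char_poly A))"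
proof -
  obtain as where cA: "char_poly A = (\<Prod>a\<leftarrow>as. [:- a, 1:])" using char_poly_factorized[OF A] by blast
  define B where "B = schur_upper_triangular A as"
  note Bp = schur_upper_triangular[OF A cA, folded B_def]
  from Bp(3) obtain P Q where w: "similar_mat_wit A B P Q" unfolding similar_mat_def by blast
  have w2: "similar_mat_wit ((-s) \<cdot>\<^sub>m A + c \<cdot>\<^sub>m 1\<^sub>m n) ((-s) \<cdot>\<^sub>m B + c \<cdot>\<^sub>m 1\<^sub>m n) P Q"
    by (rule similar_mat_wit_add_id[OF similar_mat_wit_smult[OF w]], insert A, auto)
  have e1: "c \<cdot>\<^sub>m 1\<^sub>m n - s \<cdot>\<^sub>m A = (-s) \<cdot>\<^sub>m A + c \<cdot>\<^sub>m 1\<^sub>m n"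
    by (rule eq_matI, insert A, auto)
  define D where "D = (-s) \<cdot>\<^sub>m B + c \<cdot>\<^sub>m 1\<^sub>m n"
  have D: "D \<in> carrier_mat n n" using Bp(1) unfolding D_def by auto
  have utD: "upper_triangular D" using Bp(1,2) unfolding D_def upper_triangular_def by auto
  have diagD: "diag_mat D = map (\<lambda>b. c - s * b) (diag_mat B)"
    using Bp(1) unfolding D_def diag_mat_def by auto
  have "char_poly (c \<cdot>\<^sub>m 1\<^sub>m n - s \<cdot>\<^sub>m A) = char_poly D"
    unfolding e1 D_def by (rule char_poly_similar, unfold similar_mat_def, insert w2, blast)
  also have "\<dots> = (\<Prod>a\<leftarrow>diag_mat D. [:- a, 1:])" by (rule char_poly_upper_triangular[OF D utD])
  finally have 1: "proots (char_poly (c \<cdot>\<^sub>m 1\<^sub>m n - s \<cdot>\<^sub>m A)) = mset (map (\<lambda>b. c - s * b) (diag_mat B))"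
    by (simp only: proots_linear_list diagD)
  have "char_poly A = char_poly B" by (rule char_poly_similar[OF Bp(3)])
  also have "\<dots> = (\<Prod>a\<leftarrow>diag_mat B. [:- a, 1:])" by (rule char_poly_upper_triangular[OF Bp(1,2)])
  finally have 2: "proots (char_poly A) = mset (diag_mat B)" by (simp add: proots_linear_list)
  show ?thesis unfolding 1 2 by (simp add: mset_map)
qed




definition blk :: "(nat \<Rightarrow> nat) \<Rightarrow> nat \<Rightarrow> nat" where
  "blk ns x = (if x < ns 0 then 0 else if x < ns 0 + ns 1 then 1 else 2)"

definition loc :: "(nat \<Rightarrow> nat) \<Rightarrow> nat \<Rightarrow> nat" where
  "loc ns x = x - offset ns (blk ns x)"

lemma offset_simps[simp]: "offset ns 0 = 0" "offset ns 1 = ns 0" "offset ns 2 = ns 0 + ns 1"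
  "offset ns (Suc 0) = ns 0" "offset ns (Suc (Suc 0)) = ns 0 + ns 1"
  by (auto simp: offset_def numeral_2_eq_2 One_nat_def)

lemma hjoin_order3: "hjoin_order 3 ns = ns 0 + ns 1 + ns 2"
  by (simp add: hjoin_order_def eval_nat_numeral)

lemma three_cases: "i < (3::nat) \<Longrightarrow> i = 0 \<or> i = 1 \<or> i = 2" by auto

lemma sum_lessThan_add: "(\<Sum>v<(a::nat)+b. g v) = (\<Sum>v<a. g v) + (\<Sum>v<b. g (a+v))"
  by (induction b) (auto simp: add.assoc)

lemma sum_split3: "(\<Sum>v<(a::nat)+b+c. g v) = (\<Sum>v<a. g v) + (\<Sum>v<b. g (a+v)) + (\<Sum>v<c. g (a+b+v))"
  unfolding sum_lessThan_add by (simp add: add.assoc)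

lemma sum_set_if: "(\<Sum>k\<in>{k. k < (n::nat) \<and> P k}. g k) = (\<Sum>k<n. if P k then g k else 0)"
proof -
  have e: "{k. k < n \<and> P k} = {k \<in> {..<n}. P k}" by auto
  show ?thesis unfolding e using sum.inter_filter[of "{..<n}" g P] by simp
qed

lemma card_sum: "card {v. v < (n::nat) \<and> P v} = (\<Sum>v<n. if P v then 1 else 0)"
proof -
  have "card {v \<in> {..<n}. P v} = (\<Sum>v<n. if P v then 1 else 0)"
    unfolding card_eq_sum by (subst sum.inter_filter) simp_all
  also have "{v \<in> {..<n}. P v} = {v. v < n \<and> P v}" by auto
  finally show ?thesis .
qed

lemma quad: fixes a b c x S :: real assumes S: "S * S = (a - b)^2 + 4 * c"
  shows "(x - (a + b + S) / 2) * (x - (a + b - S) / 2) = (x - a) * (x - b) - c"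
proof -
  have "(x - (a + b + S) / 2) * (x - (a + b - S) / 2) = ((2*x - a - b)^2 - S * S) / 4"
    by (simp add: field_simps power2_eq_square; simp add: algebra_simps)
  also have "\<dots> = (x - a) * (x - b) - c" unfolding S by (simp add: field_simps power2_eq_square; simp add: algebra_simps)
  finally show ?thesis .
qed

lemma poly_lin3: "poly ([:- a, 1:] * ([:- r1, 1:] * [:- r2, 1:])) (x::real) = (x - a) * ((x - r1) * (x - r2))"
  by (simp add: algebra_simps)

lemma char_poly3_eval: "poly (char_poly (mat 3 3 (\<lambda>(i,j). q i j))) (x::real) =
  (x - q 0 0) * ((x - q 1 1) * (x - q 2 2) - q 1 2 * q 2 1)
  - (- q 0 1) * ((- q 1 0) * (x - q 2 2) - q 1 2 * q 2 0)
  + (- q 0 2) * (q 1 0 * q 2 1 - (x - q 1 1) * (- q 2 0))"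
  unfolding char_poly_3 Let_def by (simp add: algebra_simps)

definition Nb :: "(nat \<Rightarrow> nat) \<Rightarrow> nat \<Rightarrow> nat" where
  "Nb ns i = (if i = 1 then ns 0 + ns 2 else ns 1)"

definition mb :: "(nat \<Rightarrow> nat) \<Rightarrow> (nat \<Rightarrow> nat \<Rightarrow> nat \<Rightarrow> bool) \<Rightarrow> (nat \<Rightarrow> nat) \<Rightarrow> real \<Rightarrow> nat \<Rightarrow> nat \<Rightarrow> nat \<Rightarrow> real" where
  "mb ns Es d s i u v = (if u = v then 1 + s^2 * (real (d i + Nb ns i) - 1) else 0) - s * (if Es i u v then 1 else 0)"

definition ab :: "(nat \<Rightarrow> nat) \<Rightarrow> (nat \<Rightarrow> nat) \<Rightarrow> real \<Rightarrow> nat \<Rightarrow> real" where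
  "ab ns d s i = 1 + s^2 * (real (d i + Nb ns i) - 1) - s * real (d i)"

definition rs :: "(nat \<Rightarrow> nat) \<Rightarrow> (nat \<Rightarrow> nat) \<Rightarrow> real \<Rightarrow> nat \<Rightarrow> nat \<Rightarrow> real" where
  "rs ns d s i j = (if i = j then ab ns d s i else real (ns j) * (if i = 1 \<or> j = 1 then -s else 0))"

context
  fixes ns :: "nat \<Rightarrow> nat" and Es :: "nat \<Rightarrow> nat \<Rightarrow> nat \<Rightarrow> bool" and d :: "nat \<Rightarrow> nat" and s :: real
  assumes graphs: "\<And>i. i < 3 \<Longrightarrow> simple_graph (ns i) (Es i)"
    and pos: "\<And>i. i < 3 \<Longrightarrow> ns i > 0"
    and reg: "\<And>i. i < 3 \<Longrightarrow> regular (ns i) (Es i) (d i)"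
begin

lemma pos3: "ns 0 > 0" "ns 1 > 0" "ns 2 > 0" using pos by auto

lemma blk_loc: assumes "x < ns 0 + ns 1 + ns 2"
  shows "blk ns x < 3" "loc ns x < ns (blk ns x)" "offset ns (blk ns x) + loc ns x = x"
  using assms by (auto simp: blk_def loc_def)

lemma blk_loc_off: assumes "i < 3" "u < ns i"
  shows "blk ns (offset ns i + u) = i" "loc ns (offset ns i + u) = u"
proof -
  have "i = 0 \<or> i = 1 \<or> i = 2" using assms by auto
  thus "blk ns (offset ns i + u) = i" "loc ns (offset ns i + u) = u"
    using assms by (auto simp: blk_def loc_def)
qed

lemma P3_iff: "i < 3 \<Longrightarrow> j < 3 \<Longrightarrow> i \<noteq> j \<Longrightarrow> P3 i j \<longleftrightarrow> (i = 1 \<or> j = 1)"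
  unfolding P3_def by (auto simp: doubleton_eq_iff)

lemma hjoin_iff:
  "hjoin_edges 3 P3 ns Es x y \<longleftrightarrow> x < ns 0 + ns 1 + ns 2 \<and> y < ns 0 + ns 1 + ns 2 \<and>
     (if blk ns x = blk ns y then Es (blk ns x) (loc ns x) (loc ns y) else (blk ns x = 1 \<or> blk ns y = 1))"
proof
  assume "hjoin_edges 3 P3 ns Es x y"
  then obtain i j u v where h: "i < 3" "j < 3" "u < ns i" "v < ns j" "x = offset ns i + u"
     "y = offset ns j + v" "(i = j \<and> Es i u v) \<or> (i \<noteq> j \<and> P3 i j)"
    unfolding hjoin_edges_def by blast
  have xb: "blk ns x = i" "loc ns x = u" using blk_loc_off[OF h(1,3)] h(5) by auto
  have yb: "blk ns y = j" "loc ns y = v" using blk_loc_off[OF h(2,4)] h(6) by auto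
  have "x < offset ns i + ns i" using h by auto
  also have "\<dots> \<le> ns 0 + ns 1 + ns 2" using h(1) by (auto dest!: three_cases)
  finally have xn: "x < ns 0 + ns 1 + ns 2" .
  have "y < offset ns j + ns j" using h by auto
  also have "\<dots> \<le> ns 0 + ns 1 + ns 2" using h(2) by (auto dest!: three_cases)
  finally have yn: "y < ns 0 + ns 1 + ns 2" .
  show "x < ns 0 + ns 1 + ns 2 \<and> y < ns 0 + ns 1 + ns 2 \<and>
     (if blk ns x = blk ns y then Es (blk ns x) (loc ns x) (loc ns y) else (blk ns x = 1 \<or> blk ns y = 1))"
    using xn yn xb yb h(7) P3_iff[OF h(1,2)] by auto
next
  assume a: "x < ns 0 + ns 1 + ns 2 \<and> y < ns 0 + ns 1 + ns 2 \<and>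
     (if blk ns x = blk ns y then Es (blk ns x) (loc ns x) (loc ns y) else (blk ns x = 1 \<or> blk ns y = 1))"
  have xn: "x < ns 0 + ns 1 + ns 2" and yn: "y < ns 0 + ns 1 + ns 2" using a by auto
  note bx = blk_loc[OF xn] and byy = blk_loc[OF yn]
  have disj: "(blk ns x = blk ns y \<and> Es (blk ns x) (loc ns x) (loc ns y)) \<or> (blk ns x \<noteq> blk ns y \<and> P3 (blk ns x) (blk ns y))"
  proof (cases "blk ns x = blk ns y")
    case True with a show ?thesis by simp
  next
    case False with a P3_iff[OF bx(1) byy(1)] show ?thesis by simp
  qed
  have ex: "x = offset ns (blk ns x) + loc ns x" "y = offset ns (blk ns y) + loc ns y" using bx(3) byy(3) by simp_all
  show "hjoin_edges 3 P3 ns Es x y" unfolding hjoin_edges_def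
    using bx(1,2) byy(1,2) ex disj by blast
qed

lemma Es_sum: assumes "i < 3" "u < ns i"
  shows "(\<Sum>v<ns i. if Es i u v then 1 else 0) = d i"
proof -
  have "(\<Sum>v<ns i. if Es i u v then 1 else 0) = card {v. v < ns i \<and> Es i u v}" by (simp add: card_sum)
  also have "\<dots> = d i" using reg[OF assms(1)] assms(2) unfolding regular_def degree_def by auto
  finally show ?thesis .
qed

lemma Es_sum_real: assumes "i < 3" "u < ns i"
  shows "(\<Sum>v<ns i. if Es i u v then 1 else 0) = real (d i)"
proof -
  have "(\<Sum>v<ns i. if Es i u v then 1 else (0::real)) = real (\<Sum>v<ns i. if Es i u v then 1 else (0::nat))"
    by (simp add: of_nat_sum if_distrib cong: if_cong)
  thus ?thesis using Es_sum[OF assms] by simp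
qed


lemma EG_block: assumes x: "x < (ns 0 + ns 1 + ns 2)" and j: "j < 3" and v: "v < ns j"
  shows "(hjoin_edges 3 P3 ns Es) x (offset ns j + v) \<longleftrightarrow> (if blk ns x = j then Es j (loc ns x) v else (blk ns x = 1 \<or> j = 1))"
proof -
  have "offset ns j + v < (ns 0 + ns 1 + ns 2)" using j v by (auto dest!: three_cases)
  thus ?thesis unfolding hjoin_iff using x blk_loc_off[OF j v] by auto
qed

lemma sum3: "(\<Sum>v<(ns 0 + ns 1 + ns 2). g v) = (\<Sum>j<3. \<Sum>v<ns j. g (offset ns j + v))"
  unfolding sum_split3 by (simp add: eval_nat_numeral)

lemma degree_G: assumes x: "x < (ns 0 + ns 1 + ns 2)"
  shows "degree (ns 0 + ns 1 + ns 2) (hjoin_edges 3 P3 ns Es) x = d (blk ns x) + Nb ns (blk ns x)"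
proof -
  let ?i = "blk ns x"
  have i: "?i < 3" "loc ns x < ns ?i" using blk_loc[OF x] by auto
  have "degree (ns 0 + ns 1 + ns 2) (hjoin_edges 3 P3 ns Es) x = (\<Sum>v<(ns 0 + ns 1 + ns 2). if (hjoin_edges 3 P3 ns Es) x v then 1 else 0)" unfolding degree_def card_sum ..
  also have "\<dots> = (\<Sum>j<3. \<Sum>v<ns j. if (hjoin_edges 3 P3 ns Es) x (offset ns j + v) then 1 else 0)" by (rule sum3)
  also have "\<dots> = (\<Sum>j<3. if ?i = j then d j else if ?i = 1 \<or> j = 1 then ns j else 0)"
  proof (rule sum.cong[OF refl])
    fix j assume "j \<in> {..<3::nat}"
    hence j: "j < 3" by auto
    have "(\<Sum>v<ns j. if (hjoin_edges 3 P3 ns Es) x (offset ns j + v) then 1 else 0) =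
      (\<Sum>v<ns j. if (if ?i = j then Es j (loc ns x) v else (?i = 1 \<or> j = 1)) then 1 else 0)"
      by (rule sum.cong, auto simp: EG_block[OF x j])
    also have "\<dots> = (if ?i = j then d j else if ?i = 1 \<or> j = 1 then ns j else 0)"
      using Es_sum[OF j, of "loc ns x"] i by auto
    finally show "(\<Sum>v<ns j. if (hjoin_edges 3 P3 ns Es) x (offset ns j + v) then 1 else 0) = (if ?i = j then d j else if ?i = 1 \<or> j = 1 then ns j else 0)" .
  qed
  also have "\<dots> = d ?i + Nb ns ?i"
  proof -
    have "?i = 0 \<or> ?i = 1 \<or> ?i = 2" using i(1) by auto
    thus ?thesis unfolding Nb_def by (elim disjE) (simp_all add: eval_nat_numeral)
  qed
  finally show ?thesis .
qed


lemma MG_carrier: "(deformed_laplacian (ns 0 + ns 1 + ns 2) (hjoin_edges 3 P3 ns Es) s) \<in> carrier_mat (ns 0 + ns 1 + ns 2) (ns 0 + ns 1 + ns 2)"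
  unfolding deformed_laplacian_def adj_mat_def deg_mat_def by auto

lemma MG_entry: assumes x: "x < (ns 0 + ns 1 + ns 2)" and y: "y < (ns 0 + ns 1 + ns 2)"
  shows "(deformed_laplacian (ns 0 + ns 1 + ns 2) (hjoin_edges 3 P3 ns Es) s) $$ (x,y) = (if blk ns x = blk ns y then mb ns Es d s (blk ns x) (loc ns x) (loc ns y)
     else (if blk ns x = 1 \<or> blk ns y = 1 then -s else 0))"
proof -
  have e1: "(deformed_laplacian (ns 0 + ns 1 + ns 2) (hjoin_edges 3 P3 ns Es) s) $$ (x,y) = (if x = y then 1 else 0) - s * (if (hjoin_edges 3 P3 ns Es) x y then 1 else 0)
    + s^2 * ((if x = y then real (degree (ns 0 + ns 1 + ns 2) (hjoin_edges 3 P3 ns Es) x) else 0) - (if x = y then 1 else 0))"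
    (is "_ = ?r")
    using x y unfolding deformed_laplacian_def adj_mat_def deg_mat_def by simp
  have e2: "x = y \<longleftrightarrow> blk ns x = blk ns y \<and> loc ns x = loc ns y"
    using blk_loc[OF x] blk_loc[OF y] by metis
  have e3: "\<not> (hjoin_edges 3 P3 ns Es) x x" using x unfolding hjoin_iff using graphs[OF blk_loc(1)[OF x]]
    unfolding simple_graph_def by auto
  show ?thesis
  proof (cases "x = y")
    case True
    show ?thesis unfolding e1 using True e2 e3 degree_G[OF x] graphs[OF blk_loc(1)[OF x]]
      unfolding simple_graph_def mb_def by (simp add: algebra_simps)
  next
    case False
    show ?thesis unfolding e1 using False e2 unfolding hjoin_iff mb_def using x y by auto
  qed
qed

definition Mi :: "nat \<Rightarrow> real mat" where
  "Mi i = mat (ns i) (ns i) (\<lambda>(u,v). mb ns Es d s i u v)"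

lemma Mi_rowsum: assumes i: "i < 3" and u: "u < ns i"
  shows "(\<Sum>v<ns i. mb ns Es d s i u v) = ab ns d s i"
proof -
  have "(\<Sum>v<ns i. mb ns Es d s i u v) = (\<Sum>v<ns i. (if v = u then 1 + s^2 * (real (d i + Nb ns i) - 1) else 0))
     - s * (\<Sum>v<ns i. if Es i u v then 1 else 0)"
    unfolding mb_def sum_subtractf sum_distrib_left by (rule arg_cong2[where f = "(-)"], auto intro!: sum.cong)
  also have "\<dots> = ab ns d s i" unfolding Es_sum_real[OF i u] ab_def using u by simp
  finally show ?thesis .
qed


definition MG :: "real mat" where
  "MG = deformed_laplacian (ns 0 + ns 1 + ns 2) (hjoin_edges 3 P3 ns Es) s"

lemma MG_carrier': "MG \<in> carrier_mat (ns 0 + ns 1 + ns 2) (ns 0 + ns 1 + ns 2)"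
  unfolding MG_def by (rule MG_carrier)

lemma MG_entry': assumes x: "x < ns 0 + ns 1 + ns 2" and y: "y < ns 0 + ns 1 + ns 2"
  shows "MG $$ (x,y) = (if blk ns x = blk ns y then mb ns Es d s (blk ns x) (loc ns x) (loc ns y)
     else (if blk ns x = 1 \<or> blk ns y = 1 then -s else 0))"
  unfolding MG_def by (rule MG_entry[OF x y])

lemma off_lt: "i < 3 \<Longrightarrow> offset ns i < ns 0 + ns 1 + ns 2"
  using pos3 by (auto dest!: three_cases)

lemma off_blk: "i < 3 \<Longrightarrow> blk ns (offset ns i) = i" "i < 3 \<Longrightarrow> loc ns (offset ns i) = 0"
  using blk_loc_off[of i 0] pos by auto

lemma off_inj: "i < 3 \<Longrightarrow> j < 3 \<Longrightarrow> offset ns i = offset ns j \<longleftrightarrow> i = j"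
  using off_blk by metis

lemma f_ok: "x < ns 0 + ns 1 + ns 2 \<Longrightarrow> offset ns (blk ns x) < ns 0 + ns 1 + ns 2 \<and>
   offset ns (blk ns (offset ns (blk ns x))) = offset ns (blk ns x)"
  using blk_loc(1) off_lt off_blk by auto

lemma f_fix: "x < ns 0 + ns 1 + ns 2 \<Longrightarrow> offset ns (blk ns x) = x \<longleftrightarrow> loc ns x = 0"
  using blk_loc[of x] by auto

lemma blocksum: assumes r: "r < ns 0 + ns 1 + ns 2" and j: "j < 3"
  shows "(\<Sum>k\<in>{k. k < ns 0 + ns 1 + ns 2 \<and> offset ns (blk ns k) = offset ns j}.
      MG $$ (r,k)) = rs ns d s (blk ns r) j"
proof -
  let ?M = "MG"
  have "(\<Sum>k\<in>{k. k < ns 0 + ns 1 + ns 2 \<and> offset ns (blk ns k) = offset ns j}. ?M $$ (r,k))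
     = (\<Sum>k<ns 0 + ns 1 + ns 2. if offset ns (blk ns k) = offset ns j then ?M $$ (r,k) else 0)"
    by (rule sum_set_if)
  also have "\<dots> = (\<Sum>j'<3. \<Sum>v<ns j'. if offset ns (blk ns (offset ns j' + v)) = offset ns j then ?M $$ (r,offset ns j' + v) else 0)"
    by (rule sum3)
  also have "\<dots> = (\<Sum>j'<3. if j' = j then (\<Sum>v<ns j. ?M $$ (r,offset ns j + v)) else 0)"
    by (rule sum.cong[OF refl], rule trans[OF sum.cong[OF refl]], rule if_cong[OF _ refl refl],
      auto simp: blk_loc_off off_inj j)
  also have "\<dots> = (\<Sum>v<ns j. ?M $$ (r,offset ns j + v))" using j by simp
  also have "\<dots> = (\<Sum>v<ns j. if blk ns r = j then mb ns Es d s j (loc ns r) v else (if blk ns r = 1 \<or> j = 1 then -s else 0))"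
  proof (rule sum.cong[OF refl])
    fix v assume "v \<in> {..<ns j}"
    hence v: "v < ns j" by auto
    have lt: "offset ns j + v < ns 0 + ns 1 + ns 2" using j v by (auto dest!: three_cases)
    show "?M $$ (r,offset ns j + v) = (if blk ns r = j then mb ns Es d s j (loc ns r) v else (if blk ns r = 1 \<or> j = 1 then -s else 0))"
      unfolding MG_entry'[OF r lt] blk_loc_off[OF j v] by auto
  qed
  also have "\<dots> = rs ns d s (blk ns r) j"
    unfolding rs_def using Mi_rowsum[OF j, of "loc ns r"] blk_loc[OF r] by auto
  finally show ?thesis .
qed

definition YG :: "nat \<Rightarrow> nat \<Rightarrow> real" where
  "YG r c = (if offset ns (blk ns c) = c then (\<Sum>k\<in>{k. k < ns 0 + ns 1 + ns 2 \<and> offset ns (blk ns k) = c}.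
      MG $$ (r,k))
     else MG $$ (r,c))"

definition NG :: "real mat" where
  "NG = mat (ns 0 + ns 1 + ns 2) (ns 0 + ns 1 + ns 2) (\<lambda>(r,c). YG r c -
     (if offset ns (blk ns r) \<noteq> r then YG (offset ns (blk ns r)) c else 0))"

lemma char_poly_NG: "char_poly (MG) = char_poly NG"
  unfolding NG_def YG_def by (rule transform[OF MG_carrier' f_ok])

lemma NG_special: assumes r: "r < ns 0 + ns 1 + ns 2" and j: "j < 3"
  shows "NG $$ (r, offset ns j) = (if loc ns r = 0 then rs ns d s (blk ns r) j else 0)"
proof -
  have fr: "offset ns (blk ns r) < ns 0 + ns 1 + ns 2" "blk ns (offset ns (blk ns r)) = blk ns r"
    using f_ok[OF r] off_blk blk_loc[OF r] by auto
  have Y: "YG x (offset ns j) = rs ns d s (blk ns x) j" if "x < ns 0 + ns 1 + ns 2" for x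
    unfolding YG_def using off_blk[OF j] blocksum[OF that j] by simp
  show ?thesis unfolding NG_def using r off_lt[OF j] Y[OF r] Y[OF fr(1)] fr(2) f_fix[OF r] by auto
qed

lemma NG_nonspecial: assumes r: "r < ns 0 + ns 1 + ns 2" and c: "c < ns 0 + ns 1 + ns 2"
  and lr: "loc ns r \<noteq> 0" and lc: "loc ns c \<noteq> 0"
  shows "NG $$ (r, c) = (if blk ns r = blk ns c then mb ns Es d s (blk ns r) (loc ns r) (loc ns c)
     - mb ns Es d s (blk ns r) 0 (loc ns c) else 0)"
proof -
  have fr: "offset ns (blk ns r) < ns 0 + ns 1 + ns 2" "blk ns (offset ns (blk ns r)) = blk ns r"
     "loc ns (offset ns (blk ns r)) = 0"
    using f_ok[OF r] off_blk blk_loc[OF r] by auto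
  have Y: "YG x c = MG $$ (x,c)" for x
    unfolding YG_def using f_fix[OF c] lc by simp
  show ?thesis unfolding NG_def using r c Y f_fix[OF r] lr
    by (auto simp: MG_entry'[OF r c] MG_entry'[OF fr(1) c] fr(2,3) off_blk[OF blk_loc(1)[OF c]])
qed


definition pm :: "nat \<Rightarrow> nat" where
  "pm i = (if i = 0 then 0 else if i = 1 then ns 0 else if i = 2 then ns 0 + ns 1
     else if i < ns 0 + 2 then i - 2 else if i < ns 0 + ns 1 + 1 then i - 1 else i)"

definition bb :: "nat \<Rightarrow> nat" where
  "bb t = (if t < ns 0 - 1 then 0 else if t < ns 0 + ns 1 - 2 then 1 else 2)"

definition ll :: "nat \<Rightarrow> nat" where
  "ll t = (if t < ns 0 - 1 then t + 1 else if t < ns 0 + ns 1 - 2 then t - (ns 0 - 1) + 1 else t - (ns 0 + ns 1 - 2) + 1)"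

lemma pm_perm: "pm permutes {0..<ns 0 + ns 1 + ns 2}"
proof (rule bij_imp_permutes)
  let ?A = "{0..<ns 0 + ns 1 + ns 2}"
  have inj: "inj_on pm ?A" unfolding inj_on_def pm_def using pos3 by (auto split: if_splits)
  have sub: "pm ` ?A \<subseteq> ?A" unfolding pm_def using pos3 by (auto split: if_splits)
  have "pm ` ?A = ?A" by (rule endo_inj_surj[OF _ sub inj], simp)
  thus "bij_betw pm ?A ?A" using inj unfolding bij_betw_def by simp
  fix x assume "x \<notin> ?A"
  thus "pm x = x" unfolding pm_def using pos3 by auto
qed

lemma pm_small: "i < 3 \<Longrightarrow> pm i = offset ns i"
  unfolding pm_def by (auto dest!: three_cases)

lemma pm_big: assumes "3 \<le> i" "i < ns 0 + ns 1 + ns 2"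
  shows "pm i < ns 0 + ns 1 + ns 2" "loc ns (pm i) \<noteq> 0" "blk ns (pm i) = bb (i - 3)" "loc ns (pm i) = ll (i - 3)"
  using assms pos3 unfolding pm_def bb_def ll_def blk_def loc_def by auto

definition Rb :: "nat \<Rightarrow> real mat" where
  "Rb i = mat (ns i - 1) (ns i - 1) (\<lambda>(u,v). mb ns Es d s i (u+1) (v+1) - mb ns Es d s i 0 (v+1))"

lemma char_poly_MG_split: "char_poly MG = char_poly (mat 3 3 (\<lambda>(i,j). rs ns d s i j)) *
   (char_poly (Rb 0) * (char_poly (Rb 1) * char_poly (Rb 2)))"
proof -
  let ?n = "ns 0 + ns 1 + ns 2"
  have NGc: "NG \<in> carrier_mat ?n ?n" unfolding NG_def by simp
  have n3: "3 \<le> ?n" using pos3 by auto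
  have "char_poly NG = char_poly (mat 3 3 (\<lambda>(i,j). NG $$ (pm i, pm j))) *
     char_poly (mat (?n-3) (?n-3) (\<lambda>(i,j). NG $$ (pm (i+3), pm (j+3))))"
  proof (rule char_poly_split[OF NGc pm_perm n3])
    fix i j :: nat assume "3 \<le> i" "i < ?n" "j < 3"
    thus "NG $$ (pm i, pm j) = 0" using pm_big[of i] pm_small[of j] NG_special by auto
  qed
  also have "mat 3 3 (\<lambda>(i,j). NG $$ (pm i, pm j)) = mat 3 3 (\<lambda>(i,j). rs ns d s i j)"
  proof (rule eq_matI)
    fix i j assume "i < dim_row (mat 3 3 (\<lambda>(i,j). rs ns d s i j))" "j < dim_col (mat 3 3 (\<lambda>(i,j). rs ns d s i j))"
    hence i: "i < 3" and j: "j < 3" by auto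
    show "mat 3 3 (\<lambda>(i,j). NG $$ (pm i, pm j)) $$ (i,j) = mat 3 3 (\<lambda>(i,j). rs ns d s i j) $$ (i,j)"
      using i j NG_special[OF off_lt[OF i] j] off_blk[OF i] pm_small[OF i] pm_small[OF j] by simp
  qed auto
  also have "mat (?n-3) (?n-3) (\<lambda>(i,j). NG $$ (pm (i+3), pm (j+3))) =
     mat (?n-3) (?n-3) (\<lambda>(i,j). if bb i = bb j then mb ns Es d s (bb i) (ll i) (ll j) - mb ns Es d s (bb i) 0 (ll j) else 0)"
    (is "_ = ?W")
  proof (rule eq_matI)
    fix i j assume "i < dim_row ?W" "j < dim_col ?W"
    hence i: "3 \<le> i + 3" "i + 3 < ?n" and j: "3 \<le> j + 3" "j + 3 < ?n" by auto
    note pi = pm_big[OF i] and pj = pm_big[OF j]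
    have e: "i + 3 - 3 = i" "j + 3 - 3 = j" by auto
    show "mat (?n-3) (?n-3) (\<lambda>(i,j). NG $$ (pm (i+3), pm (j+3))) $$ (i,j) = ?W $$ (i,j)"
      using i j NG_nonspecial[OF pi(1) pj(1) pi(2) pj(2)] unfolding pi(3,4) pj(3,4) e by simp
  qed auto
  also have "char_poly ?W = char_poly (Rb 0) * (char_poly (Rb 1) * char_poly (Rb 2))"
  proof -
    have Wc: "?W \<in> carrier_mat (?n-3) (?n-3)" by simp
    have k0: "ns 0 - 1 \<le> ?n - 3" using pos3 by auto
    have "char_poly ?W = char_poly (mat (ns 0 - 1) (ns 0 - 1) (\<lambda>(i,j). ?W $$ (id i, id j))) *
      char_poly (mat (?n - 3 - (ns 0 - 1)) (?n - 3 - (ns 0 - 1)) (\<lambda>(i,j). ?W $$ (id (i + (ns 0 - 1)), id (j + (ns 0 - 1)))))"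
      by (rule char_poly_split[OF Wc permutes_id k0], auto simp: bb_def)
    also have "mat (ns 0 - 1) (ns 0 - 1) (\<lambda>(i,j). ?W $$ (id i, id j)) = Rb 0"
      unfolding Rb_def using pos3 by (intro eq_matI, auto simp: bb_def ll_def)
    also have "mat (?n - 3 - (ns 0 - 1)) (?n - 3 - (ns 0 - 1)) (\<lambda>(i,j). ?W $$ (id (i + (ns 0 - 1)), id (j + (ns 0 - 1))))
      = mat (ns 1 - 1 + (ns 2 - 1)) (ns 1 - 1 + (ns 2 - 1)) (\<lambda>(i,j). if bb (i + (ns 0 - 1)) = bb (j + (ns 0 - 1)) then
          mb ns Es d s (bb (i + (ns 0 - 1))) (ll (i + (ns 0 - 1))) (ll (j + (ns 0 - 1))) - mb ns Es d s (bb (i + (ns 0 - 1))) 0 (ll (j + (ns 0 - 1))) else 0)"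
      (is "_ = ?W2")
      using pos3 by (intro eq_matI, auto)
    also have "char_poly ?W2 = char_poly (Rb 1) * char_poly (Rb 2)"
    proof -
      have W2c: "?W2 \<in> carrier_mat (ns 1 - 1 + (ns 2 - 1)) (ns 1 - 1 + (ns 2 - 1))" by simp
      have k1: "ns 1 - 1 \<le> ns 1 - 1 + (ns 2 - 1)" by simp
      have "char_poly ?W2 = char_poly (mat (ns 1 - 1) (ns 1 - 1) (\<lambda>(i,j). ?W2 $$ (id i, id j))) *
        char_poly (mat (ns 1 - 1 + (ns 2 - 1) - (ns 1 - 1)) (ns 1 - 1 + (ns 2 - 1) - (ns 1 - 1)) (\<lambda>(i,j). ?W2 $$ (id (i + (ns 1 - 1)), id (j + (ns 1 - 1)))))"
        by (rule char_poly_split[OF W2c permutes_id k1], insert pos3, auto simp: bb_def)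
      also have "mat (ns 1 - 1) (ns 1 - 1) (\<lambda>(i,j). ?W2 $$ (id i, id j)) = Rb 1"
        unfolding Rb_def using pos3 by (intro eq_matI, auto simp: bb_def ll_def)
      also have "mat (ns 1 - 1 + (ns 2 - 1) - (ns 1 - 1)) (ns 1 - 1 + (ns 2 - 1) - (ns 1 - 1)) (\<lambda>(i,j). ?W2 $$ (id (i + (ns 1 - 1)), id (j + (ns 1 - 1)))) = Rb 2"
      proof -
        have bl: "bb (x + (ns 1 - 1) + (ns 0 - 1)) = 2" "ll (x + (ns 1 - 1) + (ns 0 - 1)) = x + 1" for x
          unfolding bb_def ll_def using pos3 by auto
        show ?thesis
        proof (rule eq_matI)
          fix i j assume "i < dim_row (Rb 2)" "j < dim_col (Rb 2)"
          hence i: "i < ns 2 - 1" and j: "j < ns 2 - 1" by (simp_all add: Rb_def)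
          have "mat (ns 1 - 1 + (ns 2 - 1) - (ns 1 - 1)) (ns 1 - 1 + (ns 2 - 1) - (ns 1 - 1)) (\<lambda>(i,j). ?W2 $$ (id (i + (ns 1 - 1)), id (j + (ns 1 - 1)))) $$ (i,j)
             = ?W2 $$ (i + (ns 1 - 1), j + (ns 1 - 1))" using i j by simp
          also have "\<dots> = (if bb (i + (ns 1 - 1) + (ns 0 - 1)) = bb (j + (ns 1 - 1) + (ns 0 - 1)) then
            mb ns Es d s (bb (i + (ns 1 - 1) + (ns 0 - 1))) (ll (i + (ns 1 - 1) + (ns 0 - 1))) (ll (j + (ns 1 - 1) + (ns 0 - 1)))
            - mb ns Es d s (bb (i + (ns 1 - 1) + (ns 0 - 1))) 0 (ll (j + (ns 1 - 1) + (ns 0 - 1))) else 0)"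
            using i j by (subst index_mat, auto)
          also have "\<dots> = Rb 2 $$ (i,j)" unfolding bl using i j by (simp add: Rb_def)
          finally show "mat (ns 1 - 1 + (ns 2 - 1) - (ns 1 - 1)) (ns 1 - 1 + (ns 2 - 1) - (ns 1 - 1)) (\<lambda>(i,j). ?W2 $$ (id (i + (ns 1 - 1)), id (j + (ns 1 - 1)))) $$ (i,j)
             = Rb 2 $$ (i,j)" .
        qed (simp_all add: Rb_def)
      qed
      finally show ?thesis .
    qed
    finally show ?thesis .
  qed
  finally show ?thesis unfolding char_poly_NG .
qed


lemma Mi_carrier: "Mi i \<in> carrier_mat (ns i) (ns i)" unfolding Mi_def by simp

lemma char_poly_Mi: assumes i: "i < 3"
  shows "char_poly (Mi i) = [:- ab ns d s i, 1:] * char_poly (Rb i)"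
proof -
  let ?Y = "\<lambda>r c. if 0 = c then (\<Sum>k\<in>{k. k < ns i \<and> 0 = c}. Mi i $$ (r,k)) else Mi i $$ (r,c)"
  define N1 where "N1 = mat (ns i) (ns i) (\<lambda>(r,c). ?Y r c - (if 0 \<noteq> r then ?Y 0 c else 0))"
  have p: "0 < ns i" using pos[OF i] .
  have "char_poly (Mi i) = char_poly N1" unfolding N1_def
    by (rule transform[OF Mi_carrier, of i "\<lambda>_. 0"], insert p, auto)
  have Y0: "?Y r 0 = ab ns d s i" if "r < ns i" for r
  proof -
    have "{k. k < ns i \<and> 0 = (0::nat)} = {..<ns i}" by auto
    hence "?Y r 0 = (\<Sum>k<ns i. Mi i $$ (r,k))" by simp
    also have "\<dots> = (\<Sum>k<ns i. mb ns Es d s i r k)" by (rule sum.cong, insert that, auto simp: Mi_def)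
    also have "\<dots> = ab ns d s i" by (rule Mi_rowsum[OF i that])
    finally show ?thesis .
  qed
  have N1c: "N1 \<in> carrier_mat (ns i) (ns i)" unfolding N1_def by simp
  have N10: "N1 $$ (r, 0) = ab ns d s i - (if r \<noteq> 0 then ab ns d s i else 0)" if "r < ns i" for r
    unfolding N1_def using that p Y0[OF that] Y0[OF p] by simp
  have N1s: "N1 $$ (Suc u, Suc v) = mb ns Es d s i (Suc u) (Suc v) - mb ns Es d s i 0 (Suc v)"
    if "u < ns i - Suc 0" "v < ns i - Suc 0" for u v
    unfolding N1_def using that by (simp add: Mi_def)
  have k: "1 \<le> ns i" using p by simp
  have "char_poly N1 = char_poly (mat 1 1 (\<lambda>(a,b). N1 $$ (id a, id b))) *
     char_poly (mat (ns i - 1) (ns i - 1) (\<lambda>(a,b). N1 $$ (id (a+1), id (b+1))))"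
    by (rule char_poly_split[OF N1c permutes_id k], insert N10, auto)
  also have "mat 1 1 (\<lambda>(a,b). N1 $$ (id a, id b)) = mat 1 1 (\<lambda>_. ab ns d s i)"
    by (rule eq_matI, insert N10[OF p], auto)
  also have "mat (ns i - 1) (ns i - 1) (\<lambda>(a,b). N1 $$ (id (a+1), id (b+1))) = Rb i"
    unfolding Rb_def by (rule eq_matI, auto simp: N1s)
  finally have X: "char_poly N1 = char_poly (mat 1 1 (\<lambda>_. ab ns d s i)) * char_poly (Rb i)" .
  show ?thesis using X[unfolded char_poly_1] \<open>char_poly (Mi i) = char_poly N1\<close> by simp
qed


lemma char_poly_Q3: assumes d13: "d 0 = d 2"
  defines "a \<equiv> ab ns d s 0" and "b \<equiv> ab ns d s 1"
  defines "D \<equiv> (a - b)^2 + 4 * s^2 * real (ns 1) * real (ns 0 + ns 2)"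
  shows "char_poly (mat 3 3 (\<lambda>(i,j). rs ns d s i j)) =
    [:- a, 1:] * ([:- ((a + b + sqrt D) / 2), 1:] * [:- ((a + b - sqrt D) / 2), 1:])"
proof -
  have a2': "ab ns d s 2 = ab ns d s 0" unfolding ab_def Nb_def using d13 by simp
  have a2: "ab ns d s 2 = a" unfolding a_def by (rule a2')
  have D0: "D \<ge> 0" unfolding D_def by simp
  have S: "sqrt D * sqrt D = (a - b)^2 + 4 * (s^2 * real (ns 1) * real (ns 0 + ns 2))"
    using D0 unfolding D_def by (simp add: real_sqrt_mult_self)
  show ?thesis
  proof (rule poly_eq_poly_eq_iff[THEN iffD1], rule ext)
    fix x :: real
    have q: "(x - (a + b + sqrt D) / 2) * (x - (a + b - sqrt D) / 2) = (x - a) * (x - b) - s^2 * real (ns 1) * real (ns 0 + ns 2)"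
      by (rule quad[OF S])
    have r: "rs ns d s 0 0 = a" "rs ns d s 1 1 = b" "rs ns d s 2 2 = a" "rs ns d s 0 1 = - s * real (ns 1)"
      "rs ns d s 1 0 = - s * real (ns 0)" "rs ns d s 1 2 = - s * real (ns 2)" "rs ns d s 2 1 = - s * real (ns 1)"
      "rs ns d s 0 2 = 0" "rs ns d s 2 0 = 0"
      unfolding rs_def a_def b_def using a2' by auto
    show "poly (char_poly (mat 3 3 (\<lambda>(i,j). rs ns d s i j))) x =
      poly ([:- a, 1:] * ([:- ((a + b + sqrt D) / 2), 1:] * [:- ((a + b - sqrt D) / 2), 1:])) x"
      unfolding char_poly3_eval poly_lin3 r q by (simp add: algebra_simps power2_eq_square)
  qed
qed


lemma spec_Mi: assumes i: "i < 3"
  shows "spec (Mi i) = image_mset (\<lambda>\<mu>. complex_of_real (s^2 * (real (d i) + real (Nb ns i) - 1) + 1) - complex_of_real s * \<mu>)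
     (spec (adj_mat (ns i) (Es i)))"
proof -
  let ?c = "complex_of_real (s^2 * (real (d i) + real (Nb ns i) - 1) + 1)"
  have e: "map_mat complex_of_real (Mi i) = ?c \<cdot>\<^sub>m 1\<^sub>m (ns i) - complex_of_real s \<cdot>\<^sub>m map_mat complex_of_real (adj_mat (ns i) (Es i))"
    by (rule eq_matI, auto simp: Mi_def mb_def adj_mat_def algebra_simps)
  have A: "map_mat complex_of_real (adj_mat (ns i) (Es i)) \<in> carrier_mat (ns i) (ns i)" by (simp add: adj_mat_def)
  show ?thesis unfolding spec_def e by (rule spec_affine[OF A])
qed

lemma char_poly_nz: "A \<in> carrier_mat n n \<Longrightarrow> char_poly (A :: 'a :: comm_ring_1 mat) \<noteq> 0"
  using degree_monic_char_poly[of A n] by auto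

lemma lin_nz: "[:- (z :: 'a :: idom), 1:] \<noteq> 0" by simp

lemma proots_mult4: "(p :: 'a :: idom poly) \<noteq> 0 \<Longrightarrow> q \<noteq> 0 \<Longrightarrow> r \<noteq> 0 \<Longrightarrow> t \<noteq> 0 \<Longrightarrow>
  proots (p * q * r * t) = proots p + proots q + proots r + proots t"
  by (simp add: proots_mult)

lemma proots_mult2: "(p :: 'a :: idom poly) \<noteq> 0 \<Longrightarrow> t \<noteq> 0 \<Longrightarrow>
  proots (p * t) = proots p + proots t"
  by (simp add: proots_mult)

lemma proots_lin: "proots [:- (z :: 'a :: idom), 1:] = {#z#}" using proots_linear_factor[of "-z"] by simp

lemma lin2_nz: "[:- (z :: 'a :: idom), 1:] * [:- w, 1:] \<noteq> 0" by simp

lemma proots_lin2: "proots ([:- (z :: 'a :: idom), 1:] * [:- w, 1:]) = {#z, w#}"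
  unfolding proots_mult2[OF lin_nz lin_nz] proots_lin by simp

lemma main_ctx:
  assumes d13: "d 0 = d 2"
  defines "N \<equiv> (\<lambda>i::nat. if i = 1 then ns 0 + ns 2 else ns 1)"
    and "a \<equiv> s^2 * (real (d 0) + real (ns 1) - 1) - s * real (d 0) + 1"
    and "b \<equiv> s^2 * (real (d 1) + real (ns 0 + ns 2) - 1) - s * real (d 1) + 1"
  shows "spec (deformed_laplacian (hjoin_order 3 ns) (hjoin_edges 3 P3 ns Es) s) =
    (image_mset (\<lambda>\<mu>. complex_of_real (s^2 * (real (d 0) + real (N 0) - 1) + 1) - complex_of_real s * \<mu>)
        (spec (adj_mat (ns 0) (Es 0)))
     + image_mset (\<lambda>\<mu>. complex_of_real (s^2 * (real (d 1) + real (N 1) - 1) + 1) - complex_of_real s * \<mu>)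
        (spec (adj_mat (ns 1) (Es 1)))
     + image_mset (\<lambda>\<mu>. complex_of_real (s^2 * (real (d 2) + real (N 2) - 1) + 1) - complex_of_real s * \<mu>)
        (spec (adj_mat (ns 2) (Es 2)))
     + {# complex_of_real ((a + b + sqrt ((a - b)^2 + 4 * s^2 * real (ns 1) * real (ns 0 + ns 2))) / 2),
          complex_of_real ((a + b - sqrt ((a - b)^2 + 4 * s^2 * real (ns 1) * real (ns 0 + ns 2))) / 2) #})
    - {# complex_of_real a, complex_of_real b #}"
proof -
  define D where "D = (a - b)^2 + 4 * s^2 * real (ns 1) * real (ns 0 + ns 2)"
  define r1 where "r1 = (a + b + sqrt D) / 2"
  define r2 where "r2 = (a + b - sqrt D) / 2"
  have Neq: "N = Nb ns" unfolding N_def Nb_def by (rule ext, simp)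
  have MGe: "deformed_laplacian (hjoin_order 3 ns) (hjoin_edges 3 P3 ns Es) s = MG"
    unfolding hjoin_order3 MG_def ..
  have aa: "ab ns d s 0 = a" unfolding ab_def Nb_def a_def by simp
  have bb': "ab ns d s 1 = b" unfolding ab_def Nb_def b_def by simp
  have a2: "ab ns d s 2 = a" unfolding ab_def Nb_def a_def using d13 by simp
  have Q3: "char_poly (mat 3 3 (\<lambda>(i,j). rs ns d s i j)) = [:- a, 1:] * ([:- r1, 1:] * [:- r2, 1:])"
    using char_poly_Q3[OF d13] unfolding aa bb' r1_def r2_def D_def .
  have i3: "(0::nat) < 3" "(1::nat) < 3" "(2::nat) < 3" by auto
  have rid: "char_poly MG * ([:- a, 1:] * [:- b, 1:]) =
     char_poly (Mi 0) * char_poly (Mi 1) * char_poly (Mi 2) * ([:- r1, 1:] * [:- r2, 1:])"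
    unfolding char_poly_MG_split Q3 char_poly_Mi[OF i3(1)] char_poly_Mi[OF i3(2)] char_poly_Mi[OF i3(3)] aa bb' a2
    by (simp only: mult_ac)
  interpret ofr: map_poly_idom_hom "of_real :: real \<Rightarrow> complex" by unfold_locales
  let ?P = "map_poly (of_real :: real \<Rightarrow> complex)"
  have PL: "?P [:- z, 1:] = [:- complex_of_real z, 1:]" for z by (simp add: map_poly_pCons)
  have cMG: "?P (char_poly MG) = char_poly (map_mat complex_of_real MG)"
    by (rule of_real_hom.char_poly_hom[OF MG_carrier', symmetric])
  have cMi: "?P (char_poly (Mi i)) = char_poly (map_mat complex_of_real (Mi i))" for i
    by (rule of_real_hom.char_poly_hom[OF Mi_carrier, symmetric])
  from arg_cong[OF rid, of ?P]
  have cid: "char_poly (map_mat complex_of_real MG) * ([:- complex_of_real a, 1:] * [:- complex_of_real b, 1:]) =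
     char_poly (map_mat complex_of_real (Mi 0)) * char_poly (map_mat complex_of_real (Mi 1)) * char_poly (map_mat complex_of_real (Mi 2))
      * ([:- complex_of_real r1, 1:] * [:- complex_of_real r2, 1:])"
    unfolding ofr.hom_mult PL cMG cMi .
  have nzG: "char_poly (map_mat complex_of_real MG) \<noteq> 0"
    by (rule char_poly_nz, insert MG_carrier', auto)
  have nzi: "char_poly (map_mat complex_of_real (Mi i)) \<noteq> 0" for i
    by (rule char_poly_nz, insert Mi_carrier[of i], auto)
  from arg_cong[OF cid, of proots]
  have "spec MG + {# complex_of_real a, complex_of_real b #} =
     spec (Mi 0) + spec (Mi 1) + spec (Mi 2) + {# complex_of_real r1, complex_of_real r2 #}"
    unfolding spec_def proots_mult2[OF nzG lin2_nz] proots_mult4[OF nzi nzi nzi lin2_nz] proots_lin2 .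
  hence "spec MG = spec (Mi 0) + spec (Mi 1) + spec (Mi 2) + {# complex_of_real r1, complex_of_real r2 #}
     - {# complex_of_real a, complex_of_real b #}" by (metis add_diff_cancel_right')
  thus ?thesis unfolding MGe spec_Mi[OF i3(1)] spec_Mi[OF i3(2)] spec_Mi[OF i3(3)] Neq r1_def r2_def D_def .
qed

end

theorem mainTheorem11:
  fixes ns :: "nat \<Rightarrow> nat" and Es :: "nat \<Rightarrow> nat \<Rightarrow> nat \<Rightarrow> bool"
    and d :: "nat \<Rightarrow> nat" and s :: real
  assumes graphs: "\<And>i. i < 3 \<Longrightarrow> simple_graph (ns i) (Es i)"
    and nonempty: "\<And>i. i < 3 \<Longrightarrow> ns i > 0"
    and reg: "\<And>i. i < 3 \<Longrightarrow> regular (ns i) (Es i) (d i)"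
    and d13: "d 0 = d 2"
  defines "N \<equiv> (\<lambda>i::nat. if i = 1 then ns 0 + ns 2 else ns 1)"
    and "a \<equiv> s^2 * (real (d 0) + real (ns 1) - 1) - s * real (d 0) + 1"
    and "b \<equiv> s^2 * (real (d 1) + real (ns 0 + ns 2) - 1) - s * real (d 1) + 1"
  shows "spec (deformed_laplacian (hjoin_order 3 ns) (hjoin_edges 3 P3 ns Es) s) =
    (image_mset (\<lambda>\<mu>. complex_of_real (s^2 * (real (d 0) + real (N 0) - 1) + 1) - complex_of_real s * \<mu>)
        (spec (adj_mat (ns 0) (Es 0)))
     + image_mset (\<lambda>\<mu>. complex_of_real (s^2 * (real (d 1) + real (N 1) - 1) + 1) - complex_of_real s * \<mu>)
        (spec (adj_mat (ns 1) (Es 1)))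
     + image_mset (\<lambda>\<mu>. complex_of_real (s^2 * (real (d 2) + real (N 2) - 1) + 1) - complex_of_real s * \<mu>)
        (spec (adj_mat (ns 2) (Es 2)))
     + {# complex_of_real ((a + b + sqrt ((a - b)^2 + 4 * s^2 * real (ns 1) * real (ns 0 + ns 2))) / 2),
          complex_of_real ((a + b - sqrt ((a - b)^2 + 4 * s^2 * real (ns 1) * real (ns 0 + ns 2))) / 2) #})
    - {# complex_of_real a, complex_of_real b #}"
  unfolding N_def a_def b_def by (rule main_ctx[OF graphs nonempty reg d13])

end
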